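(* Let $X = \mathbb{Z}_m$ be the cyclic rack of order $m$, i.e. the set $\mathbb{Z}_m$ with operation $xy = x+1 \pmod m$ (a Rump right quasigroup with $x/y = x-1$), and let $R(x,y) = (y(x/y), x/y) = (y+1, x-1)$ be its associated solution of the Yang-Baxter equation, with set-theoretic Yang-Baxter chain complex $(C^{YB}_n(X),\partial^{YB}_n)$ (defined in the context). Identify a tuple $(a_1,\ldots,a_n)$ with $a_1\otimes\cdots\otimes a_n$, extended multilinearly to formal $\mathbb{Z}$-combinations of elements of $X$ in each slot. Define $\kappa_n: C^{YB}_n(X)\to C^{YB}_n(X)$ on generators by $$\kappa_n(x_1,\ldots,x_n) = (x_1 - x_2x_2)\otimes(x_2 - x_3x_3)\otimes\cdots\otimes(x_{n-1}-x_nx_n)\otimes x_n$$ (so $\kappa_1$ and $\kappa_0$ are the identity), where $x_jx_j$ denotes the product in $X$. Then $\kappa_* = (\kappa_n)_n$ is a chain map: $\partial^{YB}_n\circ\kappa_n = \kappa_{n-1}\circ\partial^{YB}_n$ for all $n$.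
   Context: For a set $X$ and a map $R: X\times X\to X\times X$ with components $R(x,y)=(\nu(x,y),\mu(x,y))$, the set-theoretic Yang-Baxter chain complex is: $C^{YB}_n(X)$ the free abelian group on $X^n$ ($n\ge0$). Face maps $d^l_{i,n}, d^r_{i,n}: X^n\to X^{n-1}$, $1\le i\le n$: $d^l_{1,n}$ deletes the first coordinate; for $i\ge2$, $d^l_{i,n}$ applies $R$ at positions $(i-1,i)$, then $(i-2,i-1)$, ..., then $(2,3)$, then replaces the first two coordinates $(a,b)$ by $\mu(a,b)$. $d^r_{n,n}$ deletes the last coordinate; for $i\le n-1$, $d^r_{i,n}$ applies $R$ at positions $(i,i+1)$, then $(i+1,i+2)$, ..., $(n-2,n-1)$, then replaces the last two coordinates $(a,b)$ by $\nu(a,b)$. The boundary is $\partial^{YB}_n=\sum_{i=1}^n(-1)^{i+1}(d^l_{i,n}-d^r_{i,n})$. *)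

theory Defs
  imports Main
begin

text \<open>Elements of Z_m are represented by the natural numbers 0,...,m-1.\<close>

definition rack_op :: "nat \<Rightarrow> nat \<Rightarrow> nat \<Rightarrow> nat" where
  "rack_op m x y = (x + 1) mod m"

definition rack_div :: "nat \<Rightarrow> nat \<Rightarrow> nat \<Rightarrow> nat" where
  "rack_div m x y = (x + (m - 1)) mod m"

definition nu :: "nat \<Rightarrow> nat \<Rightarrow> nat \<Rightarrow> nat" where
  "nu m x y = rack_op m y (rack_div m x y)"

definition mu :: "nat \<Rightarrow> nat \<Rightarrow> nat \<Rightarrow> nat" where
  "mu m x y = rack_div m x y"

definition R :: "nat \<Rightarrow> nat \<times> nat \<Rightarrow> nat \<times> nat" where
  "R m p = (nu m (fst p) (snd p), mu m (fst p) (snd p))"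

definition appR :: "nat \<Rightarrow> nat \<Rightarrow> nat list \<Rightarrow> nat list" where
  "appR m j xs = (let p = R m (xs ! j, xs ! Suc j) in xs[j := fst p, Suc j := snd p])"

text \<open>d^l_{i,n}: for i = 1 delete the first coordinate; for i >= 2 apply R at 1-based
  positions (i-1,i), (i-2,i-1), ..., (2,3) (0-based i-2 down to 1), then replace the first
  two coordinates (a,b) by mu(a,b).\<close>
definition dl :: "nat \<Rightarrow> nat \<Rightarrow> nat list \<Rightarrow> nat list" where
  "dl m i xs = (if i = 1 then tl xs
     else (let ys = fold (appR m) (rev [1..<i - 1]) xs
           in mu m (ys ! 0) (ys ! 1) # drop 2 ys))"

text \<open>d^r_{i,n}: for i = n delete the last coordinate; for i <= n-1 apply R at 1-based
  positions (i,i+1), ..., (n-2,n-1) (0-based i-1 up to n-3), then replace the last two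
  coordinates (a,b) by nu(a,b).\<close>
definition dr :: "nat \<Rightarrow> nat \<Rightarrow> nat \<Rightarrow> nat list \<Rightarrow> nat list" where
  "dr m n i xs = (if i = n then butlast xs
     else (let ys = fold (appR m) [i - 1..<n - 2] xs
           in take (n - 2) ys @ [nu m (ys ! (n - 2)) (ys ! (n - 1))]))"

definition tuples :: "nat \<Rightarrow> nat \<Rightarrow> nat list set" where
  "tuples m n = {xs. length xs = n \<and> set xs \<subseteq> {..<m}}"

text \<open>Since X is finite, a chain in C^{YB}_n(X) is a function X^n \<rightarrow> int (its coefficients);
  we represent chains as functions on all lists and only read their values on tuples m n.\<close>
definition lin :: "nat \<Rightarrow> nat \<Rightarrow> (nat list \<Rightarrow> nat list \<Rightarrow> int) \<Rightarrow> (nat list \<Rightarrow> int) \<Rightarrow> (nat list \<Rightarrow> int)" where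
  "lin m n g c = (\<lambda>y. \<Sum>x\<in>tuples m n. c x * g x y)"

definition delta :: "'a \<Rightarrow> 'a \<Rightarrow> int" where
  "delta x y = (if x = y then 1 else 0)"

definition bd_gen :: "nat \<Rightarrow> nat \<Rightarrow> nat list \<Rightarrow> nat list \<Rightarrow> int" where
  "bd_gen m n x = (\<lambda>y. \<Sum>i=1..n. (-1) ^ (i + 1) * (delta (dl m i x) y - delta (dr m n i x) y))"

definition bd :: "nat \<Rightarrow> nat \<Rightarrow> (nat list \<Rightarrow> int) \<Rightarrow> (nat list \<Rightarrow> int)" where
  "bd m n = lin m n (bd_gen m n)"

text \<open>Tensor product of formal Z-combinations (functions X \<rightarrow> int), one per slot.\<close>
definition tensor :: "(nat \<Rightarrow> int) list \<Rightarrow> nat list \<Rightarrow> int" where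
  "tensor ss y = (if length y = length ss then (\<Prod>i<length ss. (ss ! i) (y ! i)) else 0)"

definition kappa_gen :: "nat \<Rightarrow> nat \<Rightarrow> nat list \<Rightarrow> nat list \<Rightarrow> int" where
  "kappa_gen m n x = tensor
     (map (\<lambda>j. if j + 1 < n
                then (\<lambda>a. delta (x ! j) a - delta (rack_op m (x ! Suc j) (x ! Suc j)) a)
                else delta (x ! j)) [0..<n])"

definition kappa :: "nat \<Rightarrow> nat \<Rightarrow> (nat list \<Rightarrow> int) \<Rightarrow> (nat list \<Rightarrow> int)" where
  "kappa m n = lin m n (kappa_gen m n)"

end

theory Submission
  imports Defs
begin


definition Sm :: "nat \<Rightarrow> nat \<Rightarrow> nat" where "Sm m a = (a + (m - 1)) mod m"
definition Tm :: "nat \<Rightarrow> nat \<Rightarrow> nat" where "Tm m a = (a + 1) mod m"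

lemma mu_eq: "mu m x y = Sm m x" by (simp add: mu_def rack_div_def Sm_def)
lemma nu_eq: "nu m x y = Tm m y" by (simp add: nu_def rack_op_def Tm_def)
lemma rack_op_eq: "rack_op m b b = Tm m b" by (simp add: rack_op_def Tm_def)

lemma Sm_Tm: "b < m \<Longrightarrow> Sm m (Tm m b) = b"
proof -
  assume b: "b < m"
  have "Sm m (Tm m b) = (b + 1 + (m - 1)) mod m" by (simp add: Sm_def Tm_def mod_add_left_eq)
  also have "b + 1 + (m - 1) = b + m" using b by simp
  finally show ?thesis using b by simp
qed

lemma Tm_Sm: "b < m \<Longrightarrow> Tm m (Sm m b) = b"
proof -
  assume b: "b < m"
  have "Tm m (Sm m b) = (b + (m - 1) + 1) mod m" by (simp add: Sm_def Tm_def mod_Suc_eq)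
  also have "b + (m - 1) + 1 = b + m" using b by simp
  finally show ?thesis using b by simp
qed

lemma Sm_less: "1 \<le> m \<Longrightarrow> Sm m a < m" by (simp add: Sm_def)
lemma Tm_less: "1 \<le> m \<Longrightarrow> Tm m a < m" by (simp add: Tm_def)

lemma appR_eq: "appR m j xs = xs[j := Tm m (xs ! Suc j), Suc j := Sm m (xs ! j)]"
  by (simp add: appR_def R_def mu_eq nu_eq Let_def)

lemma appR_Suc: "appR m (Suc j) (a # xs) = a # appR m j xs"
  by (simp add: appR_eq)

lemma fold_appR_Suc: "fold (appR m) (map Suc l) (a # xs) = a # fold (appR m) l xs"
  by (induction l arbitrary: xs) (simp_all add: appR_Suc)

lemma length_appR[simp]: "length (appR m j xs) = length xs" by (simp add: appR_eq)
lemma length_fold_appR[simp]: "length (fold (appR m) l xs) = length xs"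
  by (induction l arbitrary: xs) simp_all

lemma appR_0: "appR m 0 (a # b # xs) = Tm m b # Sm m a # xs" by (simp add: appR_eq)

lemma dl_1: "dl m 1 xs = tl xs" by (simp add: dl_def)
lemma dl_1': "dl m (Suc 0) xs = tl xs" by (simp add: dl_def)

lemma dl_cons:
  assumes "2 \<le> i" "i \<le> Suc (length xs)"
  shows "dl m i (a # xs) = Sm m a # dl m (i - 1) xs"
proof (cases "i = 2")
  case True
  then show ?thesis using assms by (cases xs) (simp_all add: dl_def mu_eq)
next
  case False
  then obtain k where i: "i = Suc (Suc (Suc k))" using assms(1)
    by (metis Suc_le_D add_2_eq_Suc' le_SucE le_add_diff_inverse2 numeral_2_eq_2)
  define zs where "zs = fold (appR m) (rev [1..<Suc k]) xs"
  have lz: "length zs \<ge> 2" using assms(2) i by (simp add: zs_def)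
  then obtain p q r where zs: "zs = p # q # r"
    by (metis Suc_le_length_iff numeral_2_eq_2)
  have e1: "rev [1..<Suc (Suc k)] = map Suc (rev [0..<Suc k])"
    by (simp only: rev_map[symmetric] map_Suc_upt One_nat_def)
  have e2: "rev [0..<Suc k] = rev [1..<Suc k] @ [0]"
    by (simp add: upt_conv_Cons)
  have "fold (appR m) (rev [1..<Suc (Suc k)]) (a # xs) = a # appR m 0 zs"
    unfolding e1 fold_appR_Suc e2 by (simp add: zs_def del: upt_Suc)
  then have "dl m i (a # xs) = Sm m a # Sm m p # r"
    by (simp add: dl_def i zs appR_0 mu_eq)
  moreover have "dl m (i - 1) xs = mu m (zs ! 0) (zs ! 1) # drop 2 zs"
    by (simp add: dl_def i zs_def Let_def del: upt_Suc)
  then have "dl m (i - 1) xs = Sm m p # r" using zs by (simp add: mu_eq)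
  ultimately show ?thesis by simp
qed

lemma dr_last: "dr m n n xs = butlast xs" by (simp add: dr_def)

lemma fold_upt_0:
  "k \<le> length xs \<Longrightarrow> \<exists>a'. fold (appR m) [0..<k] (a # xs) = map (Tm m) (take k xs) @ a' # drop k xs"
proof (induction k arbitrary: a xs)
  case 0
  then show ?case by simp
next
  case (Suc k)
  then obtain b xs' where xs: "xs = b # xs'" by (cases xs) auto
  have u: "[0..<Suc k] = 0 # map Suc [0..<k]" by (simp add: upt_conv_Cons map_Suc_upt)
  obtain a'' where h: "fold (appR m) [0..<k] (Sm m a # xs') = map (Tm m) (take k xs') @ a'' # drop k xs'"
    using Suc xs by force
  have "fold (appR m) [0..<Suc k] (a # xs) = Tm m b # fold (appR m) [0..<k] (Sm m a # xs')"
    unfolding u by (simp add: xs appR_0 fold_appR_Suc)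
  then show ?case using h xs by simp
qed

lemma dr_1:
  assumes "length xs = Suc k"
  shows "dr m (Suc (Suc k)) 1 (a # xs) = map (Tm m) xs"
proof -
  obtain a' where h: "fold (appR m) [0..<k] (a # xs) = map (Tm m) (take k xs) @ a' # drop k xs"
    using fold_upt_0[of k xs m a] assms by auto
  have d: "drop k xs = [xs ! k]" using assms
    by (metis Cons_nth_drop_Suc drop_all le_refl lessI)
  have t: "xs = take k xs @ [xs ! k]" using assms
    by (metis append_take_drop_id d)
  have "dr m (Suc (Suc k)) 1 (a # xs) = map (Tm m) (take k xs) @ [Tm m (xs ! k)]"
    using assms by (simp add: dr_def h d nth_append nu_eq)
  also have "\<dots> = map (Tm m) xs" by (subst (2) t) simp
  finally show ?thesis .
qed

lemma dr_1': "length xs = Suc k \<Longrightarrow> dr m (Suc (Suc k)) (Suc 0) (a # xs) = map (Tm m) xs"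
  using dr_1 by simp

lemma dr_cons:
  assumes "length xs = n" "2 \<le> i" "i \<le> Suc n"
  shows "dr m (Suc n) i (a # xs) = a # dr m n (i - 1) xs"
proof (cases "i = Suc n")
  case True
  then have "xs \<noteq> []" using assms by auto
  then show ?thesis using True by (simp add: dr_def)
next
  case False
  then obtain j k where i: "i = Suc (Suc j)" and n: "n = Suc (Suc k)" and jk: "j \<le> k"
    using assms
    by (metis Suc_le_D Suc_le_mono add_2_eq_Suc' le_SucE le_add_diff_inverse2 numeral_2_eq_2)
  have u: "[Suc j..<Suc k] = map Suc [j..<k]" by (simp add: map_Suc_upt)
  define zs where "zs = fold (appR m) [j..<k] xs"
  have f: "fold (appR m) [Suc j..<Suc k] (a # xs) = a # zs"
    unfolding u fold_appR_Suc zs_def ..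
  have lz: "length zs = Suc (Suc k)" using assms n by (simp add: zs_def)
  have "dr m (Suc n) i (a # xs) = take (Suc k) (a # zs) @ [nu m ((a # zs) ! Suc k) ((a # zs) ! Suc (Suc k))]"
    using False unfolding dr_def i n by (simp add: f del: upt_Suc)
  also have "\<dots> = a # (take k zs @ [nu m (zs ! k) (zs ! Suc k)])" by simp
  also have "\<dots> = a # dr m n (i - 1) xs"
    using False unfolding dr_def i n by (simp add: zs_def Let_def del: upt_Suc)
  finally show ?thesis .
qed



lemma tensor_Nil: "tensor [] y = delta [] y"
  by (simp add: tensor_def delta_def)

lemma tensor_Cons: "tensor (u # ss) y = (case y of [] \<Rightarrow> 0 | b # y' \<Rightarrow> u b * tensor ss y')"
  by (cases y) (simp_all add: tensor_def prod.lessThan_Suc_shift del: prod.lessThan_Suc)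

lemma tensor_Cons_Nil[simp]: "tensor (u # ss) [] = 0"
  by (simp add: tensor_Cons)
lemma tensor_Cons_Cons[simp]: "tensor (u # ss) (b # y) = u b * tensor ss y"
  by (simp add: tensor_Cons)

lemma delta_Cons_Cons[simp]: "delta (a # z) (b # y) = delta a b * delta z y"
  by (simp add: delta_def)
lemma delta_Cons_Nil[simp]: "delta (a # z) [] = 0"
  by (simp add: delta_def)

lemma delta_sum: "finite A \<Longrightarrow> (\<Sum>c\<in>A. delta a c * f c) = (if a \<in> A then f a else 0)"
  by (simp add: delta_def if_distrib[of "\<lambda>x. x * _"] cong: if_cong)

lemma delta_sum1: "(a::nat) < m \<Longrightarrow> (\<Sum>c<m. delta a c) = (1::int)"
proof -
  assume a: "a < m"
  have "(\<Sum>c<m. delta a c) = (\<Sum>c\<in>{..<m}. delta a c * 1)" by simp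
  also have "\<dots> = 1" using a by (subst delta_sum) auto
  finally show ?thesis .
qed

lemma tuples_0: "tuples m 0 = {[]}"
  by (auto simp: tuples_def)

lemma tuples_Suc: "tuples m (Suc k) = (\<lambda>(c, z). c # z) ` ({..<m} \<times> tuples m k)"
  by (auto simp: tuples_def length_Suc_conv image_iff)

lemma finite_tuples[simp]: "finite (tuples m k)"
  by (induction k) (simp_all add: tuples_0 tuples_Suc)

lemma sum_tuples_Suc:
  "(\<Sum>z\<in>tuples m (Suc k). g z) = (\<Sum>c<m. \<Sum>z\<in>tuples m k. g (c # z))"
proof -
  have inj: "inj_on (\<lambda>(c, z). c # z) ({..<m} \<times> tuples m k)"
    by (auto simp: inj_on_def)
  show ?thesis
    unfolding tuples_Suc sum.reindex[OF inj]
    by (simp add: sum.cartesian_product split_def)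
qed

lemma Cons_in_tuples[simp]: "(c # z \<in> tuples m (Suc k)) = (c < m \<and> z \<in> tuples m k)"
  by (auto simp: tuples_def)

definition push :: "nat \<Rightarrow> nat \<Rightarrow> (nat list \<Rightarrow> nat list) \<Rightarrow> (nat list \<Rightarrow> int) \<Rightarrow> nat list \<Rightarrow> int" where
  "push m k \<phi> f y = (\<Sum>z\<in>tuples m k. f z * delta (\<phi> z) y)"

lemma push_0: "push m 0 \<phi> f y = f [] * delta (\<phi> []) y"
  by (simp add: push_def tuples_0)

lemma push_cons:
  assumes "\<forall>c<m. \<forall>z\<in>tuples m k. \<phi> (c # z) = \<psi> c # \<phi>' z"
  shows "push m (Suc k) \<phi> (tensor (u # ss)) y =
     (case y of [] \<Rightarrow> 0 | b # y' \<Rightarrow> (\<Sum>c<m. u c * delta (\<psi> c) b) * push m k \<phi>' (tensor ss) y')"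
proof -
  have "push m (Suc k) \<phi> (tensor (u # ss)) y =
     (\<Sum>c<m. \<Sum>z\<in>tuples m k. u c * tensor ss z * delta (\<psi> c # \<phi>' z) y)"
    unfolding push_def sum_tuples_Suc
    by (rule sum.cong, simp, rule sum.cong, simp, simp add: assms)
  also have "\<dots> = (case y of [] \<Rightarrow> 0 | b # y' \<Rightarrow> (\<Sum>c<m. u c * delta (\<psi> c) b) * push m k \<phi>' (tensor ss) y')"
    by (cases y) (simp_all add: push_def sum_product mult_ac)
  finally show ?thesis .
qed

lemma push_del:
  assumes "\<forall>c<m. \<forall>z\<in>tuples m k. \<phi> (c # z) = \<phi>' z"
  shows "push m (Suc k) \<phi> (tensor (u # ss)) y = (\<Sum>c<m. u c) * push m k \<phi>' (tensor ss) y"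
proof -
  have "push m (Suc k) \<phi> (tensor (u # ss)) y =
     (\<Sum>c<m. \<Sum>z\<in>tuples m k. u c * (tensor ss z * delta (\<phi>' z) y))"
    unfolding push_def sum_tuples_Suc
    by (rule sum.cong, simp, rule sum.cong, simp, simp add: assms)
  also have "\<dots> = (\<Sum>c<m. u c) * push m k \<phi>' (tensor ss) y"
    by (simp add: push_def sum_product)
  finally show ?thesis .
qed

fun Kl :: "nat \<Rightarrow> nat list \<Rightarrow> (nat \<Rightarrow> int) list" where
  "Kl m [] = []"
| "Kl m [a] = [delta a]"
| "Kl m (a # b # w) = (\<lambda>c. delta a c - delta (Tm m b) c) # Kl m (b # w)"

fun KS :: "nat \<Rightarrow> nat list \<Rightarrow> (nat \<Rightarrow> int) list" where
  "KS m [] = []"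
| "KS m [a] = []"
| "KS m (a # b # w) = (\<lambda>c. delta (Sm m a) c - delta b c) # KS m (b # w)"

fun KB :: "nat \<Rightarrow> nat list \<Rightarrow> (nat \<Rightarrow> int) list" where
  "KB m [] = []"
| "KB m [a] = []"
| "KB m (a # b # w) = (\<lambda>c. delta a c - delta (Tm m b) c) # KB m (b # w)"

lemma upt_0_Suc: "[0..<Suc n] = 0 # map Suc [0..<n]"
  by (metis map_Suc_upt upt_conv_Cons zero_less_Suc)

lemma kappa_map_Kl:
  "map (\<lambda>j. if j + 1 < length x
            then (\<lambda>a. delta (x ! j) a - delta (rack_op m (x ! Suc j) (x ! Suc j)) a)
            else delta (x ! j)) [0..<length x] = Kl m x"
proof (induction m x rule: Kl.induct)
  case (3 m a b w)
  have u: "[0..<length (a # b # w)] = 0 # map Suc [0..<length (b # w)]"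
    by (simp only: length_Cons upt_0_Suc)
  show ?case unfolding u list.map map_map using 3 by (simp add: o_def rack_op_eq nth_Cons_Suc cong: if_cong del: upt_Suc)
qed simp_all

lemma kappa_gen_Kl: "kappa_gen m (length x) x = tensor (Kl m x)"
  unfolding kappa_gen_def kappa_map_Kl ..



lemma tuples_length: "z \<in> tuples m k \<Longrightarrow> length z = k"
  by (simp add: tuples_def)

lemma Nil_notin_tuples_Suc[simp]: "[] \<notin> tuples m (Suc k)"
  by (simp add: tuples_def)

lemma map_Tm_tuples: "1 \<le> m \<Longrightarrow> z \<in> tuples m k \<Longrightarrow> map (Tm m) z \<in> tuples m k"
  by (auto simp: tuples_def Tm_less)

lemma dl_tuples:
  "1 \<le> m \<Longrightarrow> x \<in> tuples m (Suc n) \<Longrightarrow> 1 \<le> i \<Longrightarrow> i \<le> Suc n \<Longrightarrow> dl m i x \<in> tuples m n"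
proof (induction x arbitrary: n i)
  case Nil
  then show ?case by simp
next
  case (Cons a x')
  then have a: "a < m" and x': "x' \<in> tuples m n" by auto
  show ?case
  proof (cases "i = 1")
    case True
    then show ?thesis using x' by (simp add: dl_1 dl_1')
  next
    case False
    then obtain n' where n: "n = Suc n'" using Cons.prems by (cases n) auto
    have "dl m i (a # x') = Sm m a # dl m (i - 1) x'"
      using False Cons.prems tuples_length[OF x'] by (intro dl_cons) auto
    moreover have "dl m (i - 1) x' \<in> tuples m n'"
      using Cons.IH[of n' "i - 1"] Cons.prems x' n False by auto
    ultimately show ?thesis using n Sm_less[OF Cons.prems(1)] by simp
  qed
qed

lemma dr_tuples:
  "1 \<le> m \<Longrightarrow> x \<in> tuples m (Suc n) \<Longrightarrow> 1 \<le> i \<Longrightarrow> i \<le> Suc n \<Longrightarrow> dr m (Suc n) i x \<in> tuples m n"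
proof (induction x arbitrary: n i)
  case Nil
  then show ?case by simp
next
  case (Cons a x')
  then have a: "a < m" and x': "x' \<in> tuples m n" by auto
  have lx: "length x' = n" using tuples_length[OF x'] .
  show ?case
  proof (cases "i = Suc n")
    case True
    then have "dr m (Suc n) i (a # x') = butlast (a # x')" by (simp add: dr_last)
    then show ?thesis using Cons.prems x'
      by (auto simp: tuples_def dest: in_set_butlastD)
  next
    case ne: False
    show ?thesis
    proof (cases "i = 1")
      case True
      then obtain k where n: "n = Suc k" using ne by (cases n) auto
      show ?thesis using dr_1[of x' k m a] lx n True map_Tm_tuples[OF Cons.prems(1) x'] by simp
    next
      case False
      then obtain n' where n: "n = Suc n'" using Cons.prems by (cases n) auto
      have "dr m (Suc n) i (a # x') = a # dr m n (i - 1) x'"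
        using False Cons.prems lx by (intro dr_cons) auto
      moreover have "dr m n (i - 1) x' \<in> tuples m n'"
        using Cons.IH[of n' "i - 1"] Cons.prems x' n False by auto
      ultimately show ?thesis using n a by simp
    qed
  qed
qed

lemma sum_diff_delta:
  fixes f :: "nat \<Rightarrow> int"
  assumes "a < m" "b < m"
  shows "(\<Sum>c<m. (delta a c - delta b c) * f c) = f a - f b"
  using assms by (simp add: left_diff_distrib sum_subtractf delta_sum)

lemma sum_diff_delta1:
  assumes "(a::nat) < m" "b < m"
  shows "(\<Sum>c<m. (delta a c - delta b c)) = (0::int)"
  using sum_diff_delta[OF assms, of "\<lambda>_. 1"] by simp

lemma pushL:
  "1 \<le> m \<Longrightarrow> x \<in> tuples m N \<Longrightarrow> 1 \<le> i \<Longrightarrow> i \<le> N \<Longrightarrow>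
   push m N (dl m i) (tensor (Kl m x)) y = (if i = N then tensor (KS m x) y else 0)"
proof (induction m x arbitrary: N i y rule: Kl.induct)
  case (1 m)
  then show ?case by (simp add: tuples_def)
next
  case (2 m a)
  then have N: "N = Suc 0" "i = 1" and a: "a < m" by (auto simp: tuples_def)
  have "push m (Suc 0) (dl m i) (tensor [delta a]) y = (\<Sum>c<m. delta a c) * push m 0 (\<lambda>z. z) (tensor []) y"
    by (rule push_del) (simp add: N dl_1 dl_1')
  then show ?case using a N by (simp add: delta_sum1 push_0 tensor_Nil delta_def)
next
  case (3 m a b w)
  define L where "L = length w"
  have N: "N = Suc (Suc L)" using 3(3) by (simp add: tuples_def L_def)
  have a: "a < m" and bw: "b # w \<in> tuples m (Suc L)" using 3(3) N by auto
  have b: "b < m" using bw by simp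
  have Tb: "Tm m b < m" using Tm_less[OF 3(2)] .
  show ?case
  proof (cases "i = 1")
    case True
    have "push m (Suc (Suc L)) (dl m i) (tensor ((\<lambda>c. delta a c - delta (Tm m b) c) # Kl m (b # w))) y
        = (\<Sum>c<m. delta a c - delta (Tm m b) c) * push m (Suc L) (\<lambda>z. z) (tensor (Kl m (b # w))) y"
      by (rule push_del) (simp add: True dl_1 dl_1')
    then show ?thesis using True N sum_diff_delta1[OF a Tb] by simp
  next
    case False
    have "push m (Suc (Suc L)) (dl m i) (tensor ((\<lambda>c. delta a c - delta (Tm m b) c) # Kl m (b # w))) y
        = (case y of [] \<Rightarrow> 0 | d # y' \<Rightarrow> (\<Sum>c<m. (delta a c - delta (Tm m b) c) * delta (Sm m c) d)
              * push m (Suc L) (dl m (i - 1)) (tensor (Kl m (b # w))) y')"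
    proof (intro push_cons allI impI ballI)
      fix c z assume "c < m" "z \<in> tuples m (Suc L)"
      then show "dl m i (c # z) = Sm m c # dl m (i - 1) z"
        using False 3(4,5) N by (intro dl_cons) (auto dest: tuples_length)
    qed
    moreover have "\<And>y'. push m (Suc L) (dl m (i - 1)) (tensor (Kl m (b # w))) y'
        = (if i - 1 = Suc L then tensor (KS m (b # w)) y' else 0)"
      using 3(1)[OF 3(2) bw] False 3(4,5) N by auto
    moreover have "\<And>d. (\<Sum>c<m. (delta a c - delta (Tm m b) c) * delta (Sm m c) d) = delta (Sm m a) d - delta b d"
      using sum_diff_delta[OF a Tb] Sm_Tm[OF b] by simp
    ultimately show ?thesis using N False by (cases y) auto
  qed
qed

lemma pushR:
  "1 \<le> m \<Longrightarrow> x \<in> tuples m N \<Longrightarrow> 1 \<le> i \<Longrightarrow> i \<le> N \<Longrightarrow>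
   push m N (dr m N i) (tensor (Kl m x)) y = (if i = N then tensor (KB m x) y else 0)"
proof (induction m x arbitrary: N i y rule: Kl.induct)
  case (1 m)
  then show ?case by (simp add: tuples_def)
next
  case (2 m a)
  then have N: "N = Suc 0" "i = 1" and a: "a < m" by (auto simp: tuples_def)
  have "push m (Suc 0) (dr m (Suc 0) i) (tensor [delta a]) y = (\<Sum>c<m. delta a c) * push m 0 (\<lambda>z. z) (tensor []) y"
    by (rule push_del) (simp add: N dr_last tuples_0)
  then show ?case using a N by (simp add: delta_sum1 push_0 tensor_Nil delta_def)
next
  case (3 m a b w)
  define L where "L = length w"
  have N: "N = Suc (Suc L)" using 3(3) by (simp add: tuples_def L_def)
  have a: "a < m" and bw: "b # w \<in> tuples m (Suc L)" using 3(3) N by auto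
  have b: "b < m" using bw by simp
  have Tb: "Tm m b < m" using Tm_less[OF 3(2)] .
  show ?case
  proof (cases "i = 1")
    case True
    have "push m (Suc (Suc L)) (dr m (Suc (Suc L)) i) (tensor ((\<lambda>c. delta a c - delta (Tm m b) c) # Kl m (b # w))) y
        = (\<Sum>c<m. delta a c - delta (Tm m b) c) * push m (Suc L) (map (Tm m)) (tensor (Kl m (b # w))) y"
      by (rule push_del) (auto simp: True intro!: dr_1' dest: tuples_length)
    then show ?thesis using True N sum_diff_delta1[OF a Tb] by simp
  next
    case False
    have "push m (Suc (Suc L)) (dr m (Suc (Suc L)) i) (tensor ((\<lambda>c. delta a c - delta (Tm m b) c) # Kl m (b # w))) y
        = (case y of [] \<Rightarrow> 0 | d # y' \<Rightarrow> (\<Sum>c<m. (delta a c - delta (Tm m b) c) * delta c d)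
              * push m (Suc L) (dr m (Suc L) (i - 1)) (tensor (Kl m (b # w))) y')"
    proof (intro push_cons allI impI ballI)
      fix c z assume "c < m" "z \<in> tuples m (Suc L)"
      then show "dr m (Suc (Suc L)) i (c # z) = c # dr m (Suc L) (i - 1) z"
        using False 3(4,5) N by (intro dr_cons) (auto dest: tuples_length)
    qed
    moreover have "\<And>y'. push m (Suc L) (dr m (Suc L) (i - 1)) (tensor (Kl m (b # w))) y'
        = (if i - 1 = Suc L then tensor (KB m (b # w)) y' else 0)"
      using 3(1)[OF 3(2) bw] False 3(4,5) N by auto
    moreover have "\<And>d. (\<Sum>c<m. (delta a c - delta (Tm m b) c) * delta c d) = delta a d - delta (Tm m b) d"
      using sum_diff_delta[OF a Tb] by simp
    ultimately show ?thesis using N False by (cases y) auto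
  qed
qed



lemma length_Kl[simp]: "length (Kl m x) = length x"
  by (induction m x rule: Kl.induct) auto

lemma tensor_wrong_len: "length y \<noteq> length ss \<Longrightarrow> tensor ss y = 0"
  by (simp add: tensor_def)

lemma split3:
  fixes g :: "nat \<Rightarrow> int"
  shows "(\<Sum>i = Suc 0..Suc (Suc (Suc L)). g i) = g (Suc 0) + g (Suc (Suc 0)) + (\<Sum>j = Suc (Suc 0)..Suc (Suc L). g (Suc j))"
proof -
  have "(\<Sum>i = Suc 0..Suc (Suc (Suc L)). g i) = g (Suc 0) + (\<Sum>i = Suc (Suc 0)..Suc (Suc (Suc L)). g i)"
    by (rule sum.atLeast_Suc_atMost) simp
  also have "(\<Sum>i = Suc (Suc 0)..Suc (Suc (Suc L)). g i) = g (Suc (Suc 0)) + (\<Sum>i = Suc (Suc (Suc 0))..Suc (Suc (Suc L)). g i)"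
    by (rule sum.atLeast_Suc_atMost) simp
  also have "(\<Sum>i = Suc (Suc (Suc 0))..Suc (Suc (Suc L)). g i) = (\<Sum>j = Suc (Suc 0)..Suc (Suc L). g (Suc j))"
    by (rule sum.shift_bounds_cl_Suc_ivl)
  finally show ?thesis by simp
qed

lemma split2:
  fixes g :: "nat \<Rightarrow> int"
  shows "(\<Sum>i = Suc 0..Suc (Suc L). g i) = g (Suc 0) + (\<Sum>j = Suc (Suc 0)..Suc (Suc L). g j)"
  by (rule sum.atLeast_Suc_atMost) simp

lemma sumL:
  "1 \<le> m \<Longrightarrow> x \<in> tuples m N \<Longrightarrow> 1 \<le> N \<Longrightarrow>
   (\<Sum>i = 1..N. (-1::int) ^ (i + 1) * tensor (Kl m (dl m i x)) y) = (-1) ^ (N + 1) * tensor (KS m x) y"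
proof (induction m x arbitrary: N y rule: Kl.induct)
  case (1 m)
  then show ?case by (simp add: tuples_def)
next
  case (2 m a)
  then have N: "N = Suc 0" by (simp add: tuples_def)
  then show ?case by (simp add: dl_1' tensor_Nil)
next
  case (3 m a b w)
  have a: "a < m" and bw: "b # w \<in> tuples m (length (b # w))" using 3(3) by (auto simp: tuples_def)
  have N: "N = Suc (Suc (length w))" using 3(3) by (simp add: tuples_def)
  show ?case
  proof (cases w)
    case Nil
    have d2: "dl m (Suc (Suc 0)) [a, b] = [Sm m a]"
      by (subst dl_cons) (simp_all add: dl_1')
    have s: "{1..Suc (Suc 0)} = {Suc 0, Suc (Suc 0)}" by auto
    show ?thesis
      using Nil N d2 by (cases y) (simp_all add: s dl_1' tensor_Nil algebra_simps)
  next
    case (Cons c w')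
    define L where "L = length w'"
    define x' where "x' = b # c # w'"
    have NL: "N = Suc (Suc (Suc L))" using N Cons L_def by simp
    have x'T: "x' \<in> tuples m (Suc (Suc L))" using bw Cons by (simp add: x'_def L_def)
    have b: "b < m" using bw by simp
    have c: "c < m" using bw Cons by simp
    have IH: "(\<Sum>i = 1..Suc (Suc L). (-1::int) ^ (i + 1) * tensor (Kl m (dl m i x')) y') =
               (-1) ^ (Suc (Suc L) + 1) * tensor (KS m x') y'" for y'
      using 3(1)[OF 3(2), of "Suc (Suc L)" y'] x'T Cons by (simp add: x'_def)
    have xx: "a # b # w = a # x'" using Cons x'_def by simp
    have d2: "dl m (Suc (Suc 0)) (a # x') = Sm m a # c # w'"
      by (subst dl_cons) (simp_all add: dl_1' x'_def)
    have d3: "Kl m (dl m (Suc j) (a # x')) = (\<lambda>e. delta (Sm m a) e - delta b e) # Kl m (dl m j x')"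
      if j: "j \<in> {Suc (Suc 0)..Suc (Suc L)}" for j
    proof -
      have "dl m (Suc j) (a # x') = Sm m a # dl m j x'"
        using j by (subst dl_cons) (auto simp: x'_def L_def)
      moreover have "dl m j x' = Sm m b # dl m (j - 1) (c # w')"
        using j unfolding x'_def by (subst dl_cons) (auto simp: L_def)
      ultimately show ?thesis using Tm_Sm[OF b] by simp
    qed
    show ?thesis
    proof (cases y)
      case Nil
      have "tensor (Kl m (dl m i (a # b # w))) y = 0" if "i \<in> {1..N}" for i
      proof -
        have "dl m i (a # b # w) \<in> tuples m (Suc (Suc L))"
          using dl_tuples[OF 3(2), of "a # b # w" "Suc (Suc L)" i] 3(3) that NL by auto
        then show ?thesis using Nil by (intro tensor_wrong_len) (auto dest!: tuples_length)
      qed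
      then show ?thesis using Nil Cons by simp
    next
      case (Cons d y')
      define A where "A = tensor (Kl m (c # w')) y'"
      define Q where "Q = (\<Sum>j = Suc (Suc 0)..Suc (Suc L). (-1::int) ^ (j + 1) * tensor (Kl m (dl m j x')) y')"
      define K' where "K' = tensor (KS m x') y'"
      define v where "v = delta (Sm m a) d - delta b d"
      define P where "P = (-1::int) ^ (Suc (Suc L) + 1)"
      have AQ: "A + Q = P * K'"
        using IH[of y'] split2[of "\<lambda>j. (-1::int) ^ (j + 1) * tensor (Kl m (dl m j x')) y'" L]
        by (simp add: A_def Q_def K'_def P_def x'_def dl_1')
      have Qs: "(\<Sum>j = Suc (Suc 0)..Suc (Suc L). (-1::int) ^ (Suc j + 1) * tensor (Kl m (dl m (Suc j) (a # x'))) y) = - v * Q"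
        unfolding Q_def sum_distrib_left
        by (rule sum.cong) (simp_all add: d3 Cons v_def algebra_simps)
      define g where "g i = (-1::int) ^ (i + 1) * tensor (Kl m (dl m i (a # x'))) y" for i
      have g1: "g (Suc 0) = (delta b d - delta (Tm m c) d) * A"
        by (simp add: g_def dl_1' Cons A_def x'_def)
      have g2: "g (Suc (Suc 0)) = - ((delta (Sm m a) d - delta (Tm m c) d) * A)"
        by (simp add: g_def d2 Cons A_def)
      have "(\<Sum>i = 1..N. (-1::int) ^ (i + 1) * tensor (Kl m (dl m i (a # b # w))) y) = (\<Sum>i = Suc 0..Suc (Suc (Suc L)). g i)"
        unfolding NL One_nat_def xx g_def ..
      also have "\<dots> = g (Suc 0) + g (Suc (Suc 0)) + (\<Sum>j = Suc (Suc 0)..Suc (Suc L). g (Suc j))"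
        by (rule split3)
      also have "\<dots> = (delta b d - delta (Tm m c) d) * A - (delta (Sm m a) d - delta (Tm m c) d) * A - v * Q"
      proof -
        have Qs': "(\<Sum>j = Suc (Suc 0)..Suc (Suc L). g (Suc j)) = - v * Q"
          using Qs by (simp only: g_def)
        show ?thesis by (simp only: g1 g2 Qs')
      qed
      also have "\<dots> = - v * (A + Q)" by (simp add: v_def algebra_simps)
      also have "\<dots> = (-1) ^ (N + 1) * tensor (KS m (a # b # w)) y"
        by (simp add: AQ NL Cons P_def K'_def v_def xx x'_def algebra_simps)
      finally show ?thesis .
    qed
  qed
qed

lemma sumR:
  "1 \<le> m \<Longrightarrow> x \<in> tuples m N \<Longrightarrow> 1 \<le> N \<Longrightarrow>
   (\<Sum>i = 1..N. (-1::int) ^ (i + 1) * tensor (Kl m (dr m N i x)) y) = (-1) ^ (N + 1) * tensor (KB m x) y"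
proof (induction m x arbitrary: N y rule: Kl.induct)
  case (1 m)
  then show ?case by (simp add: tuples_def)
next
  case (2 m a)
  then have N: "N = Suc 0" by (simp add: tuples_def)
  then show ?case by (simp add: dr_last tensor_Nil)
next
  case (3 m a b w)
  have a: "a < m" and bw: "b # w \<in> tuples m (length (b # w))" using 3(3) by (auto simp: tuples_def)
  have N: "N = Suc (Suc (length w))" using 3(3) by (simp add: tuples_def)
  show ?case
  proof (cases w)
    case Nil
    have d1: "dr m (Suc (Suc 0)) (Suc 0) [a, b] = [Tm m b]"
      by (subst dr_1') simp_all
    have d2: "dr m (Suc (Suc 0)) (Suc (Suc 0)) [a, b] = [a]"
      by (simp add: dr_last)
    have s: "{1..Suc (Suc 0)} = {Suc 0, Suc (Suc 0)}" by auto
    show ?thesis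
      using Nil N d1 d2 by (cases y) (simp_all add: s tensor_Nil algebra_simps)
  next
    case (Cons c w')
    define L where "L = length w'"
    define x' where "x' = b # c # w'"
    have NL: "N = Suc (Suc (Suc L))" using N Cons L_def by simp
    have x'T: "x' \<in> tuples m (Suc (Suc L))" using bw Cons by (simp add: x'_def L_def)
    have b: "b < m" using bw by simp
    have c: "c < m" using bw Cons by simp
    have IH: "(\<Sum>i = 1..Suc (Suc L). (-1::int) ^ (i + 1) * tensor (Kl m (dr m (Suc (Suc L)) i x')) y') =
               (-1) ^ (Suc (Suc L) + 1) * tensor (KB m x') y'" for y'
      using 3(1)[OF 3(2), of "Suc (Suc L)" y'] x'T Cons by (simp add: x'_def)
    have xx: "a # b # w = a # x'" using Cons x'_def by simp
    have d1: "dr m (Suc (Suc (Suc L))) (Suc 0) (a # x') = Tm m b # Tm m c # map (Tm m) w'"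
      by (subst dr_1') (simp_all add: x'_def L_def)
    have d1': "dr m (Suc (Suc L)) (Suc 0) x' = Tm m c # map (Tm m) w'"
    proof -
      have "length (c # w') = Suc L" by (simp add: L_def)
      from dr_1'[OF this, of m b] show ?thesis by (simp add: x'_def)
    qed
    have d2: "dr m (Suc (Suc (Suc L))) (Suc (Suc 0)) (a # x') = a # Tm m c # map (Tm m) w'"
      using d1' by (subst dr_cons[where n = "Suc (Suc L)"]) (auto simp: x'_def L_def)
    have d3: "Kl m (dr m (Suc (Suc (Suc L))) (Suc j) (a # x')) = (\<lambda>e. delta a e - delta (Tm m b) e) # Kl m (dr m (Suc (Suc L)) j x')"
      if j: "j \<in> {Suc (Suc 0)..Suc (Suc L)}" for j
    proof -
      have "dr m (Suc (Suc (Suc L))) (Suc j) (a # x') = a # dr m (Suc (Suc L)) j x'"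
        using j by (subst dr_cons[where n = "Suc (Suc L)"]) (auto simp: x'_def L_def)
      moreover have "dr m (Suc (Suc L)) j x' = b # dr m (Suc L) (j - 1) (c # w')"
        using j unfolding x'_def by (subst dr_cons[where n = "Suc L"]) (auto simp: L_def)
      ultimately show ?thesis by simp
    qed
    show ?thesis
    proof (cases y)
      case Nil
      have "tensor (Kl m (dr m N i (a # b # w))) y = 0" if "i \<in> {1..N}" for i
      proof -
        have "dr m (Suc (Suc (Suc L))) i (a # b # w) \<in> tuples m (Suc (Suc L))"
          using dr_tuples[OF 3(2), of "a # b # w" "Suc (Suc L)" i] 3(3) that NL by auto
        then show ?thesis using Nil NL by (intro tensor_wrong_len) (auto dest!: tuples_length)
      qed
      then show ?thesis using Nil Cons by simp
    next
      case (Cons d y')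
      define A where "A = tensor (Kl m (Tm m c # map (Tm m) w')) y'"
      define Q where "Q = (\<Sum>j = Suc (Suc 0)..Suc (Suc L). (-1::int) ^ (j + 1) * tensor (Kl m (dr m (Suc (Suc L)) j x')) y')"
      define K' where "K' = tensor (KB m x') y'"
      define v where "v = delta a d - delta (Tm m b) d"
      define P where "P = (-1::int) ^ (Suc (Suc L) + 1)"
      have AQ: "A + Q = P * K'"
        using IH[of y'] split2[of "\<lambda>j. (-1::int) ^ (j + 1) * tensor (Kl m (dr m (Suc (Suc L)) j x')) y'" L]
        by (simp add: A_def Q_def K'_def P_def d1')
      have Qs: "(\<Sum>j = Suc (Suc 0)..Suc (Suc L). (-1::int) ^ (Suc j + 1) * tensor (Kl m (dr m (Suc (Suc (Suc L))) (Suc j) (a # x'))) y) = - v * Q"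
        unfolding Q_def sum_distrib_left
        by (rule sum.cong) (simp_all add: d3 Cons v_def algebra_simps)
      define g where "g i = (-1::int) ^ (i + 1) * tensor (Kl m (dr m (Suc (Suc (Suc L))) i (a # x'))) y" for i
      have g1: "g (Suc 0) = (delta (Tm m b) d - delta (Tm m (Tm m c)) d) * A"
        by (simp add: g_def d1 Cons A_def)
      have g2: "g (Suc (Suc 0)) = - ((delta a d - delta (Tm m (Tm m c)) d) * A)"
        by (simp add: g_def d2 Cons A_def)
      have "(\<Sum>i = 1..N. (-1::int) ^ (i + 1) * tensor (Kl m (dr m N i (a # b # w))) y) = (\<Sum>i = Suc 0..Suc (Suc (Suc L)). g i)"
        unfolding NL One_nat_def xx g_def ..
      also have "\<dots> = g (Suc 0) + g (Suc (Suc 0)) + (\<Sum>j = Suc (Suc 0)..Suc (Suc L). g (Suc j))"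
        by (rule split3)
      also have "\<dots> = (delta (Tm m b) d - delta (Tm m (Tm m c)) d) * A - (delta a d - delta (Tm m (Tm m c)) d) * A - v * Q"
      proof -
        have Qs': "(\<Sum>j = Suc (Suc 0)..Suc (Suc L). g (Suc j)) = - v * Q"
          using Qs by (simp only: g_def)
        show ?thesis by (simp only: g1 g2 Qs')
      qed
      also have "\<dots> = - v * (A + Q)" by (simp add: v_def algebra_simps)
      also have "\<dots> = (-1) ^ (N + 1) * tensor (KB m (a # b # w)) y"
        by (simp add: AQ NL Cons P_def K'_def v_def xx x'_def algebra_simps)
      finally show ?thesis .
    qed
  qed
qed



lemma kappa_gen_tuples: "z \<in> tuples m n \<Longrightarrow> kappa_gen m n z = tensor (Kl m z)"
  using kappa_gen_Kl[of m z] tuples_length[of z m n] by simp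

lemma sum_mult_diff: "(\<Sum>z\<in>A. (s::int) * (f z - g z)) = s * (sum f A - sum g A)"
  by (simp add: sum_distrib_left[symmetric] sum_subtractf)

lemma genL:
  assumes m: "1 \<le> m" and x: "x \<in> tuples m (Suc n)"
  shows "(\<Sum>z\<in>tuples m (Suc n). kappa_gen m (Suc n) x z * bd_gen m (Suc n) z y)
       = (-1) ^ (Suc n + 1) * (tensor (KS m x) y - tensor (KB m x) y)"
proof -
  let ?N = "Suc n"
  let ?T = "tensor (Kl m x)"
  have "(\<Sum>z\<in>tuples m ?N. kappa_gen m ?N x z * bd_gen m ?N z y)
      = (\<Sum>z\<in>tuples m ?N. \<Sum>i = 1..?N. (-1) ^ (i + 1) * (?T z * delta (dl m i z) y - ?T z * delta (dr m ?N i z) y))"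
    unfolding kappa_gen_tuples[OF x] bd_gen_def sum_distrib_left
    by (simp add: algebra_simps)
  also have "\<dots> = (\<Sum>i = 1..?N. (-1) ^ (i + 1) * (push m ?N (dl m i) ?T y - push m ?N (dr m ?N i) ?T y))"
    unfolding push_def by (subst sum.swap) (rule sum.cong, simp, rule sum_mult_diff)
  also have "\<dots> = (\<Sum>i = 1..?N. if i = ?N then (-1) ^ (Suc n + 1) * (tensor (KS m x) y - tensor (KB m x) y) else 0)"
    by (rule sum.cong) (auto simp: pushL[OF m x] pushR[OF m x])
  also have "\<dots> = (-1) ^ (Suc n + 1) * (tensor (KS m x) y - tensor (KB m x) y)"
    by simp
  finally show ?thesis .
qed

lemma genR:
  assumes m: "1 \<le> m" and x: "x \<in> tuples m (Suc n)"
  shows "(\<Sum>z\<in>tuples m n. bd_gen m (Suc n) x z * kappa_gen m n z y)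
       = (-1) ^ (Suc n + 1) * (tensor (KS m x) y - tensor (KB m x) y)"
proof -
  let ?N = "Suc n"
  have "(\<Sum>z\<in>tuples m n. bd_gen m ?N x z * kappa_gen m n z y)
      = (\<Sum>z\<in>tuples m n. \<Sum>i = 1..?N. (-1) ^ (i + 1) * (delta (dl m i x) z * kappa_gen m n z y - delta (dr m ?N i x) z * kappa_gen m n z y))"
    unfolding bd_gen_def sum_distrib_right
    by (simp add: algebra_simps)
  also have "\<dots> = (\<Sum>i = 1..?N. (-1) ^ (i + 1) * ((\<Sum>z\<in>tuples m n. delta (dl m i x) z * kappa_gen m n z y) - (\<Sum>z\<in>tuples m n. delta (dr m ?N i x) z * kappa_gen m n z y)))"
    by (subst sum.swap) (rule sum.cong, simp, rule sum_mult_diff)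
  also have "\<dots> = (\<Sum>i = 1..?N. (-1) ^ (i + 1) * tensor (Kl m (dl m i x)) y - (-1) ^ (i + 1) * tensor (Kl m (dr m ?N i x)) y)"
  proof (rule sum.cong)
    fix i assume i: "i \<in> {1..?N}"
    have a: "dl m i x \<in> tuples m n" using dl_tuples[OF m x] i by auto
    have b: "dr m ?N i x \<in> tuples m n" using dr_tuples[OF m x] i by auto
    show "(-1) ^ (i + 1) * ((\<Sum>z\<in>tuples m n. delta (dl m i x) z * kappa_gen m n z y) - (\<Sum>z\<in>tuples m n. delta (dr m ?N i x) z * kappa_gen m n z y))
        = (-1) ^ (i + 1) * tensor (Kl m (dl m i x)) y - (-1) ^ (i + 1) * tensor (Kl m (dr m ?N i x)) y"
      using a b by (simp only: delta_sum finite_tuples if_True) (simp add: kappa_gen_tuples algebra_simps)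
  qed simp
  also have "\<dots> = (-1) ^ (Suc n + 1) * (tensor (KS m x) y - tensor (KB m x) y)"
  proof -
    have sL: "(\<Sum>i = 1..?N. (-1::int) ^ (i + 1) * tensor (Kl m (dl m i x)) y) = (-1) ^ (?N + 1) * tensor (KS m x) y"
      by (rule sumL[OF m x]) simp
    have sR: "(\<Sum>i = 1..?N. (-1::int) ^ (i + 1) * tensor (Kl m (dr m ?N i x)) y) = (-1) ^ (?N + 1) * tensor (KB m x) y"
      by (rule sumR[OF m x]) simp
    show ?thesis unfolding sum_subtractf sL sR by (simp only: right_diff_distrib)
  qed
  finally show ?thesis .
qed

theorem mainTheorem4:
  fixes m n :: nat and c :: "nat list \<Rightarrow> int"
  assumes "m \<ge> 1"
  shows "bd m (Suc n) (kappa m (Suc n) c) = kappa m n (bd m (Suc n) c)"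
proof (rule ext)
  fix y
  define G where "G x = (-1::int) ^ (Suc n + 1) * (tensor (KS m x) y - tensor (KB m x) y)" for x
  have "bd m (Suc n) (kappa m (Suc n) c) y
      = (\<Sum>z\<in>tuples m (Suc n). \<Sum>x\<in>tuples m (Suc n). c x * (kappa_gen m (Suc n) x z * bd_gen m (Suc n) z y))"
    unfolding bd_def kappa_def lin_def sum_distrib_right by (simp add: mult.assoc)
  also have "\<dots> = (\<Sum>x\<in>tuples m (Suc n). c x * G x)"
    by (subst sum.swap) (simp add: sum_distrib_left[symmetric] genL[OF assms] G_def)
  finally have L: "bd m (Suc n) (kappa m (Suc n) c) y = (\<Sum>x\<in>tuples m (Suc n). c x * G x)" .
  have "kappa m n (bd m (Suc n) c) y
      = (\<Sum>z\<in>tuples m n. \<Sum>x\<in>tuples m (Suc n). c x * (bd_gen m (Suc n) x z * kappa_gen m n z y))"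
    unfolding bd_def kappa_def lin_def sum_distrib_right by (simp add: mult.assoc)
  also have "\<dots> = (\<Sum>x\<in>tuples m (Suc n). c x * G x)"
    by (subst sum.swap) (simp add: sum_distrib_left[symmetric] genR[OF assms] G_def)
  finally show "bd m (Suc n) (kappa m (Suc n) c) y = kappa m n (bd m (Suc n) c) y"
    using L by simp
qed

end
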